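(* Let $\alpha$ and $\beta$ be 5-cycles in the symmetric group $S_6$ such that $\mathrm{Supp}(\alpha) \neq \mathrm{Supp}(\beta)$. Then one of the permutations $\alpha\beta$, $\alpha\beta^3$, $\alpha^2\beta$ is not a 5-cycle.
   Context: Permutations act on the right and are composed left to right, i.e. $i(\alpha\beta) = (i\alpha)\beta$. $\mathrm{Supp}(\alpha)$ denotes the set of points moved by $\alpha$. The lemma is used in showing that the d-identity $(x_1^{12}=1)\vee(x_2^{30}=1)\vee((x_1x_1^{x_2})^{12}=1)\vee((x_1x_1^{3x_2})^{12}=1)\vee((x_1^2x_1^{x_2})^{12}=1)$ holds in the alternating group $A_6$ (here $x_1^{x_2}=x_2^{-1}x_1x_2$). *)

theory Defs
  imports "HOL-Combinatorics.Cycles"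
begin

text \<open>The symmetric group S_6 is modelled as the permutations of {1..6} (functions
  nat => nat that permute {1..6}). Permutations act on the right and compose left to
  right, so the product alpha beta (first alpha, then beta) is the function beta o alpha.\<close>

definition Supp :: "(nat \<Rightarrow> nat) \<Rightarrow> nat set" where
  "Supp \<sigma> = {i. \<sigma> i \<noteq> i}"

definition is_5cycle :: "(nat \<Rightarrow> nat) \<Rightarrow> bool" where
  "is_5cycle \<sigma> \<longleftrightarrow> (\<exists>cs. distinct cs \<and> length cs = 5 \<and> set cs \<subseteq> {1..6} \<and> \<sigma> = cycle_of_list cs)"

definition pmul :: "(nat \<Rightarrow> nat) \<Rightarrow> (nat \<Rightarrow> nat) \<Rightarrow> (nat \<Rightarrow> nat)" where
  "pmul a b = b \<circ> a"

end

theory Submission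
  imports Defs
begin

definition bad :: "(nat \<Rightarrow> nat) \<Rightarrow> bool" where
 "bad p = ((\<exists>x\<in>set [1..<7]. (p^^5) x \<noteq> x) \<or> (\<forall>x\<in>set [1..<7]. p x = x))"

definition lc :: "nat list \<Rightarrow> nat list \<Rightarrow> nat list" where
  "lc P Q = map (\<lambda>x. Q ! (P ! x)) [0..<7]"

fun lpow :: "nat list \<Rightarrow> nat \<Rightarrow> nat list" where
  "lpow P 0 = [0..<7]"
| "lpow P (Suc n) = lc (lpow P n) P"

definition lbad :: "nat list \<Rightarrow> bool" where
  "lbad P = ((\<exists>x\<in>set [1..<7]. lpow P 5 ! x \<noteq> x) \<or> (\<forall>x\<in>set [1..<7]. P ! x = x))"

definition lchk :: "nat list \<Rightarrow> bool" where
  "lchk ds = (let B = map (cycle_of_list ds) [0..<7]; A = map (cycle_of_list [1,2,3,4,5::nat]) [0..<7] in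
     lbad (lc A B) \<or> lbad (lc A (lpow B 3)) \<or> lbad (lc (lpow A 2) B))"

lemma core: "\<forall>rs \<in> set (List.n_lists 4 [1..<5]). distinct rs \<longrightarrow> lchk (6#rs)"
  by code_simp

definition rep :: "(nat \<Rightarrow> nat) \<Rightarrow> nat list \<Rightarrow> bool" where
  "rep f P \<longleftrightarrow> length P = 7 \<and> (\<forall>x<7. f x = P ! x \<and> P ! x < 7)"

lemma rep_comp: "rep f P \<Longrightarrow> rep g Q \<Longrightarrow> rep (g \<circ> f) (lc P Q)"
  unfolding rep_def lc_def by auto

lemma rep_id: "rep id [0..<7]"
  unfolding rep_def by auto

lemma rep_pow: "rep f P \<Longrightarrow> rep (f ^^ n) (lpow P n)"
proof (induction n)
  case 0 then show ?case using rep_id unfolding id_def by simp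
next
  case (Suc n)
  have "rep (f \<circ> f ^^ n) (lc (lpow P n) P)" by (rule rep_comp[OF Suc.IH[OF Suc.prems] Suc.prems])
  then show ?case by (simp only: funpow.simps lpow.simps)
qed

lemma bad_eq: "rep f P \<Longrightarrow> bad f = lbad P"
proof -
  assume r: "rep f P"
  have r5: "rep (f ^^ 5) (lpow P 5)" by (rule rep_pow[OF r])
  have a: "\<forall>x\<in>set [1..<7]. (f ^^ 5) x = lpow P 5 ! x" using r5 unfolding rep_def by auto
  have b: "\<forall>x\<in>set [1..<7]. f x = P ! x" using r unfolding rep_def by auto
  show ?thesis unfolding bad_def lbad_def using a b by auto
qed

lemma rep_cyc:
  assumes "set ds \<subseteq> {1..6}"
  shows "rep (cycle_of_list ds) (map (cycle_of_list ds) [0..<7])"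
  unfolding rep_def
proof (intro conjI allI impI)
  fix x :: nat assume x: "x < 7"
  show "cycle_of_list ds x = map (cycle_of_list ds) [0..<7] ! x" using x by simp
  show "map (cycle_of_list ds) [0..<7] ! x < 7"
  proof (cases "x \<in> set ds")
    case True
    hence "cycle_of_list ds x \<in> set ds" using cycle_permutes permutes_in_image by metis
    then show ?thesis using x assms by auto
  next
    case False
    then show ?thesis using x id_outside_supp[OF False] by simp
  qed
qed simp

lemma lchk_chk:
  assumes "set ds \<subseteq> {1..6}" "lchk ds"
  shows "bad (cycle_of_list ds \<circ> cycle_of_list [1,2,3,4,5]) \<or>
         bad ((cycle_of_list ds ^^ 3) \<circ> cycle_of_list [1,2,3,4,5]) \<or>
         bad (cycle_of_list ds \<circ> (cycle_of_list [1,2,3,4,5] ^^ 2))"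
proof -
  define B where "B = map (cycle_of_list ds) [0..<7]"
  define A where "A = map (cycle_of_list [1,2,3,4,5::nat]) [0..<7]"
  have rb: "rep (cycle_of_list ds) B" unfolding B_def by (rule rep_cyc[OF assms(1)])
  have ra: "rep (cycle_of_list [1,2,3,4,5]) A" unfolding A_def by (rule rep_cyc) auto
  have "lbad (lc A B) \<or> lbad (lc A (lpow B 3)) \<or> lbad (lc (lpow A 2) B)"
    using assms(2) unfolding lchk_def Let_def A_def B_def .
  moreover have "bad (cycle_of_list ds \<circ> cycle_of_list [1,2,3,4,5]) = lbad (lc A B)"
    by (rule bad_eq[OF rep_comp[OF ra rb]])
  moreover have "bad ((cycle_of_list ds ^^ 3) \<circ> cycle_of_list [1,2,3,4,5]) = lbad (lc A (lpow B 3))"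
    by (rule bad_eq[OF rep_comp[OF ra rep_pow[OF rb]]])
  moreover have "bad (cycle_of_list ds \<circ> (cycle_of_list [1,2,3,4,5] ^^ 2)) = lbad (lc (lpow A 2) B)"
    by (rule bad_eq[OF rep_comp[OF rep_pow[OF ra] rb]])
  ultimately show ?thesis by simp
qed

lemma cyc_step:
  assumes "distinct cs" "i < length cs"
  shows "cycle_of_list cs (cs ! i) = cs ! ((Suc i) mod length cs)"
proof -
  have "map ((cycle_of_list cs) ^^ 1) cs = rotate 1 cs"
    using cyclic_rotation[of cs 1] assms by simp
  hence "map (cycle_of_list cs) cs ! i = rotate 1 cs ! i" by simp
  thus ?thesis using assms nth_rotate[of i cs 1] by simp
qed

lemma supp_cyc:
  assumes "distinct cs" "length cs = 5"
  shows "Supp (cycle_of_list cs) = set cs"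
proof
  show "Supp (cycle_of_list cs) \<subseteq> set cs"
    unfolding Supp_def using id_outside_supp by fastforce
  show "set cs \<subseteq> Supp (cycle_of_list cs)"
  proof
    fix x assume "x \<in> set cs"
    then obtain i where i: "i < 5" "x = cs ! i" using assms by (metis in_set_conv_nth)
    have "cycle_of_list cs x = cs ! (Suc i mod 5)" using cyc_step[of cs i] i assms by simp
    moreover have "Suc i mod 5 \<noteq> i" using i(1) by (cases "Suc i = 5") auto
    moreover have "Suc i mod 5 < 5" by simp
    ultimately have "cycle_of_list cs x \<noteq> x" using i assms nth_eq_iff_index_eq by metis
    thus "x \<in> Supp (cycle_of_list cs)" unfolding Supp_def by simp
  qed
qed

lemma cyc_rotate:
  assumes "distinct cs" shows "cycle_of_list (rotate k cs) = cycle_of_list cs"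
proof (rule ext)
  fix x
  show "cycle_of_list (rotate k cs) x = cycle_of_list cs x"
  proof (cases "x \<in> set cs")
    case False then show ?thesis using id_outside_supp by (metis set_rotate)
  next
    case True
    define n where "n = length cs"
    have n: "0 < n" using True unfolding n_def by (cases cs) auto
    define r where "r = rotate k cs"
    have lr: "length r = n" unfolding r_def n_def by simp
    have "x \<in> set r" using True unfolding r_def by simp
    then obtain i where i: "i < n" "x = r ! i" using lr by (metis in_set_conv_nth)
    have dr: "distinct r" using assms unfolding r_def by simp
    have e1: "cycle_of_list r x = r ! (Suc i mod n)" using cyc_step[OF dr, of i] i lr by simp
    have "Suc i mod n < length cs" using n n_def by simp
    hence e2: "r ! (Suc i mod n) = cs ! ((k + Suc i mod n) mod n)"
      unfolding r_def using nth_rotate n_def by metis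
    have e3: "(k + Suc i mod n) mod n = Suc ((k + i) mod n) mod n"
      by (simp add: mod_add_right_eq mod_Suc_eq)
    have e4: "cycle_of_list cs (cs ! ((k + i) mod n)) = cs ! (Suc ((k + i) mod n) mod n)"
      using cyc_step[OF assms, of "(k + i) mod n"] n unfolding n_def by simp
    have e5: "x = cs ! ((k + i) mod n)" using i nth_rotate unfolding r_def n_def by simp
    show ?thesis using e1 e2 e3 e4 e5 unfolding r_def by simp
  qed
qed

lemma funpow_fix: "f x = x \<Longrightarrow> (f ^^ n) x = x"
  by (induction n) auto

lemma is5_not_bad:
  assumes "is_5cycle p" shows "\<not> bad p"
proof -
  obtain cs where cs: "distinct cs" "length cs = 5" "set cs \<subseteq> {1..6}" "p = cycle_of_list cs"
    using assms unfolding is_5cycle_def by blast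
  have m5: "map (p ^^ 5) cs = cs"
    using cyclic_rotation[of cs 5] cs by (simp add: rotate_id)
  have "(p ^^ 5) x = x" for x
  proof (cases "x \<in> set cs")
    case True
    then obtain i where "i < length cs" "x = cs ! i" by (metis in_set_conv_nth)
    then show ?thesis using m5 by (metis nth_map)
  next
    case False
    then show ?thesis using id_outside_supp[OF False] cs(4) funpow_fix by metis
  qed
  moreover have "p (cs ! 0) \<noteq> cs ! 0"
    using cyc_step[of cs 0] cs nth_eq_iff_index_eq by fastforce
  moreover have "cs ! 0 \<in> set cs" using cs(2) by simp
  hence "cs ! 0 \<in> set [1..<7]" using cs(3) by auto
  ultimately show ?thesis unfolding bad_def by auto
qed

lemma conj_funpow:
  assumes "bij t" shows "(t \<circ> g \<circ> inv t) ^^ n = t \<circ> (g ^^ n) \<circ> inv t"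
proof (induction n)
  case 0 then show ?case using surj_f_inv_f[OF bij_is_surj[OF assms]] by (auto simp: fun_eq_iff)
next
  case (Suc n)
  have "((t \<circ> g \<circ> inv t) ^^ Suc n) x = (t \<circ> (g ^^ Suc n) \<circ> inv t) x" for x
  proof -
    have "((t \<circ> g \<circ> inv t) ^^ Suc n) x = (t \<circ> g \<circ> inv t) (((t \<circ> g \<circ> inv t) ^^ n) x)" by simp
    also have "\<dots> = t (g (inv t (t ((g ^^ n) (inv t x)))))" by (subst Suc.IH) simp
    also have "\<dots> = t (g ((g ^^ n) (inv t x)))" using inv_f_f[OF bij_is_inj[OF assms]] by simp
    also have "\<dots> = (t \<circ> (g ^^ Suc n) \<circ> inv t) x" by simp
    finally show ?thesis .
  qed
  then show ?case by (rule ext)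
qed

lemma conj5:
  assumes "t permutes {1..6}" "is_5cycle h"
  shows "is_5cycle (inv t \<circ> h \<circ> t)"
proof -
  obtain es where es: "distinct es" "length es = 5" "set es \<subseteq> {1..6}" "h = cycle_of_list es"
    using assms(2) unfolding is_5cycle_def by blast
  have bt: "bij (inv t)" using assms(1) by (simp add: permutes_bij bij_imp_bij_inv)
  have "inv t \<circ> h \<circ> inv (inv t) = cycle_of_list (map (inv t) es)"
    using conjugation_of_cycle[OF _ bt, of es] es by simp
  moreover have "inv (inv t) = t" using assms(1) by (simp add: permutes_bij inv_inv_eq)
  moreover have "distinct (map (inv t) es)" using es(1) inj_on_subset[OF bij_is_inj[OF bt]] by (simp add: distinct_map)
  moreover have "set (map (inv t) es) \<subseteq> {1..6}"
    using es(3) permutes_inv[OF assms(1)] permutes_in_image by fastforce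
  ultimately show ?thesis unfolding is_5cycle_def using es(2) by (metis length_map)
qed

theorem lemma5:
  fixes \<alpha> \<beta> :: "nat \<Rightarrow> nat"
  assumes "\<alpha> permutes {1..6}" and "\<beta> permutes {1..6}"
    and "is_5cycle \<alpha>" and "is_5cycle \<beta>"
    and "Supp \<alpha> \<noteq> Supp \<beta>"
  shows "\<not> is_5cycle (pmul \<alpha> \<beta>) \<or> \<not> is_5cycle (pmul \<alpha> (\<beta> ^^ 3))
         \<or> \<not> is_5cycle (pmul (\<alpha> ^^ 2) \<beta>)"
proof -
  obtain cs0 where cs0: "distinct cs0" "length cs0 = 5" "set cs0 \<subseteq> {1..6}" "\<alpha> = cycle_of_list cs0"
    using assms(3) unfolding is_5cycle_def by blast
  obtain ds where ds: "distinct ds" "length ds = 5" "set ds \<subseteq> {1..6}" "\<beta> = cycle_of_list ds"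
    using assms(4) unfolding is_5cycle_def by blast
  have sa: "Supp \<alpha> = set cs0" using supp_cyc[OF cs0(1,2)] cs0(4) by simp
  have sb: "Supp \<beta> = set ds" using supp_cyc[OF ds(1,2)] ds(4) by simp
  have rem: "set xs = {1..6} - {y}" if "distinct xs" "length xs = 5" "set xs \<subseteq> {1..6}" "y \<in> {1..6}" "y \<notin> set xs"
    for xs :: "nat list" and y
  proof (rule card_subset_eq)
    show "set xs \<subseteq> {1..6} - {y}" using that by auto
    show "card (set xs) = card ({1..6::nat} - {y})" using that distinct_card[of xs] by simp
  qed simp
  have "card (set cs0) = 5" using cs0 distinct_card by metis
  hence "set cs0 \<noteq> {1..6::nat}" by auto
  then obtain m where m: "m \<in> {1..6}" "m \<notin> set cs0" using cs0(3) by blast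
  have "card (set ds) = 5" using ds distinct_card by metis
  hence "set ds \<noteq> {1..6::nat}" by auto
  then obtain f where f: "f \<in> {1..6}" "f \<notin> set ds" using ds(3) by blast
  have "f \<noteq> m"
  proof
    assume "f = m"
    hence "set ds = set cs0" using rem[OF ds(1-3) f] rem[OF cs0(1-3) m] by simp
    thus False using assms(5) sa sb by simp
  qed
  hence "f \<in> set cs0" using rem[OF cs0(1-3) m] f by auto
  then obtain j where j: "j < 5" "cs0 ! j = f" using cs0(2) by (metis in_set_conv_nth)
  define cs where "cs = rotate (Suc j) cs0"
  have csa: "distinct cs" "length cs = 5" "set cs \<subseteq> {1..6}"
    unfolding cs_def using cs0 by auto
  have csb: "\<alpha> = cycle_of_list cs"
    unfolding cs_def by (simp only: cyc_rotate[OF cs0(1)] cs0(4))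
  note cs = csa csb
  have m': "m \<notin> set cs" using m unfolding cs_def by simp
  have cs4: "cs ! 4 = f"
  proof -
    have "cs ! 4 = cs0 ! ((Suc j + 4) mod 5)" unfolding cs_def using nth_rotate[of 4 cs0 "Suc j"] cs0(2) by (simp del: rotate_Suc)
    also have "(Suc j + 4) mod 5 = j" using j(1) by simp
    finally show ?thesis using j by simp
  qed
  define L where "L = cs @ [m]"
  have Ld: "distinct L" "length L = 6" using cs m' unfolding L_def by auto
  have Ls: "set L = {1..6}"
  proof (rule card_subset_eq)
    show "set L \<subseteq> {1..6}" using cs m unfolding L_def by auto
    show "card (set L) = card {1..6::nat}" using Ld distinct_card by fastforce
  qed simp
  define t where "t = (\<lambda>i::nat. if i \<in> {1..6} then L ! (i - 1) else i)"
  have t5: "t 5 = f" unfolding t_def L_def using cs4 cs(2) by (simp add: nth_append)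
  have tin: "inj_on t {1..6}"
  proof
    fix x y assume xy: "x \<in> {1..6::nat}" "y \<in> {1..6::nat}" "t x = t y"
    hence "L ! (x - 1) = L ! (y - 1)" unfolding t_def by simp
    hence "x - 1 = y - 1" using Ld xy(1,2) nth_eq_iff_index_eq by fastforce
    thus "x = y" using xy by auto
  qed
  have tim: "t ` {1..6} \<subseteq> {1..6}"
  proof
    fix y assume "y \<in> t ` {1..6}"
    then obtain x where x: "x \<in> {1..6::nat}" "y = t x" by blast
    hence "y = L ! (x - 1)" unfolding t_def by simp
    moreover have "x - 1 < length L" using x Ld by auto
    ultimately have "y \<in> set L" by simp
    thus "y \<in> {1..6}" using Ls by simp
  qed
  have "bij_betw t {1..6} {1..6}"
    using tin tim by (simp add: bij_betw_def endo_inj_surj)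
  hence tp: "t permutes {1..6}"
    by (rule bij_imp_permutes) (auto simp: t_def)
  have bt: "bij t" using tp permutes_bij by blast
  define c0 where "c0 = cycle_of_list [1,2,3,4,5::nat]"
  have mapt: "map t [1,2,3,4,5] = cs"
    using cs(2) unfolding t_def L_def
    by (intro nth_equalityI) (auto simp: nth_append less_Suc_eq numeral_eq_Suc)
  have al: "\<alpha> = t \<circ> c0 \<circ> inv t"
  proof -
    have "t \<circ> c0 \<circ> inv t = cycle_of_list (map t [1,2,3,4,5])"
      unfolding c0_def by (rule conjugation_of_cycle) (simp_all add: bt)
    thus ?thesis using mapt cs(4) by metis
  qed
  define ds' where "ds' = map (inv t) ds"
  have mapd: "map t ds' = ds" unfolding ds'_def using bt
    by (simp add: map_idI bij_is_surj surj_f_inv_f)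
  have d'd: "distinct ds'" unfolding ds'_def
    using ds(1) inj_on_subset[OF bij_is_inj[OF bij_imp_bij_inv[OF bt]], of "set ds"]
    by (simp add: distinct_map)
  define b' where "b' = cycle_of_list ds'"
  have be: "\<beta> = t \<circ> b' \<circ> inv t"
  proof -
    have "t \<circ> b' \<circ> inv t = cycle_of_list (map t ds')"
      unfolding b'_def by (rule conjugation_of_cycle) (simp_all add: bt d'd)
    thus ?thesis using mapd ds(4) by metis
  qed
  have d's: "set ds' \<subseteq> {1..6}" unfolding ds'_def
    using ds(3) permutes_inv[OF tp] permutes_in_image by fastforce
  have n5: "5 \<notin> set ds'"
  proof
    assume "5 \<in> set ds'"
    hence "t 5 \<in> set (map t ds')" by simp
    thus False using mapd t5 f by simp
  qed
  have ld': "length ds' = 5" using ds(2) unfolding ds'_def by simp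
  have sd': "set ds' = {1..6} - {5}"
  proof (rule card_subset_eq)
    show "set ds' \<subseteq> {1..6} - {5}" using d's n5 by auto
    show "card (set ds') = card ({1..6::nat} - {5})" using d'd distinct_card[of ds'] ld' by simp
  qed simp
  hence "6 \<in> set ds'" by simp
  then obtain k where k: "k < 5" "ds' ! k = 6" using ld' by (metis in_set_conv_nth)
  define dr where "dr = rotate k ds'"
  have drd: "distinct dr" "length dr = 5" "set dr = {1..6} - {5}" unfolding dr_def using d'd ld' sd' by auto
  have br: "b' = cycle_of_list dr" unfolding b'_def dr_def using cyc_rotate[OF d'd] by simp
  have dr0: "dr ! 0 = 6" unfolding dr_def using nth_rotate[of 0 ds' k] ld' k by simp
  have drc: "dr = 6 # tl dr" using dr0 drd(2) by (cases dr) auto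
  have "set (tl dr) \<subseteq> set [1..<5]"
  proof
    fix x assume x: "x \<in> set (tl dr)"
    hence "x \<in> set dr" using drc by (metis list.set_intros(2))
    moreover have "x \<noteq> 6" using x drd(1) drc by (metis distinct.simps(2))
    ultimately show "x \<in> set [1..<5]" using drd(3) by auto
  qed
  moreover have "length (tl dr) = 4" using drd(2) by simp
  moreover have "distinct (tl dr)" using drd(1) by (simp add: distinct_tl)
  ultimately have "lchk (6 # tl dr)" using core unfolding set_n_lists by blast
  hence "lchk dr" using drc by metis
  hence ch: "bad (b' \<circ> c0) \<or> bad ((b' ^^ 3) \<circ> c0) \<or> bad (b' \<circ> (c0 ^^ 2))"
    using lchk_chk[of dr] drd(3) unfolding br c0_def by auto
  have iff: "inv t (t x) = x" for x using inv_f_f[OF bij_is_inj[OF bt]] .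
  have inv_conj: "inv t \<circ> (t \<circ> g \<circ> inv t) \<circ> t = g" for g
    by (simp add: fun_eq_iff iff)
  have prod: "t \<circ> g \<circ> inv t \<circ> (t \<circ> h \<circ> inv t) = t \<circ> (g \<circ> h) \<circ> inv t" for g h
    by (simp add: fun_eq_iff iff)
  have p1: "pmul \<alpha> \<beta> = t \<circ> (b' \<circ> c0) \<circ> inv t"
    by (simp only: pmul_def al be prod)
  have p2: "pmul \<alpha> (\<beta> ^^ 3) = t \<circ> ((b' ^^ 3) \<circ> c0) \<circ> inv t"
    by (simp only: pmul_def al be conj_funpow[OF bt] prod)
  have p3: "pmul (\<alpha> ^^ 2) \<beta> = t \<circ> (b' \<circ> (c0 ^^ 2)) \<circ> inv t"
    by (simp only: pmul_def al be conj_funpow[OF bt] prod)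
  have key: "\<not> is_5cycle (t \<circ> g \<circ> inv t)" if bg: "bad g" for g
  proof
    assume "is_5cycle (t \<circ> g \<circ> inv t)"
    hence "is_5cycle (inv t \<circ> (t \<circ> g \<circ> inv t) \<circ> t)" by (rule conj5[OF tp])
    hence "is_5cycle g" by (simp only: inv_conj)
    thus False using is5_not_bad bg by blast
  qed
  from ch show ?thesis
  proof (elim disjE)
    assume "bad (b' \<circ> c0)" thus ?thesis using key p1 by simp
  next
    assume "bad ((b' ^^ 3) \<circ> c0)" thus ?thesis using key p2 by simp
  next
    assume "bad (b' \<circ> (c0 ^^ 2))" thus ?thesis using key p3 by simp
  qed
qed

end
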